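(* Let $E,F$ be vector lattices with $F$ Dedekind complete, and let $S,T\in\mathcal{U}_+(E,F)$ be disjoint elements of the vector lattice $\mathcal{U}(E,F)$, i.e. $S\wedge T=0$. Then for every $x\in E$, every weak order unit $u$ of $F$ and every $\varepsilon>0$ there exist a partition of unity $(\pi_\alpha)_{\alpha\in\Delta}$ in $\mathfrak{P}(F)$ and a family $(x_\alpha)_{\alpha\in\Delta}$ of fragments of $x$ such that \[ \pi_\alpha\big(Tx_\alpha+S(x-x_\alpha)\big)\le\varepsilon u\quad\text{for all }\alpha\in\Delta. \]
   Context: For a vector lattice $E$, an element $z$ is a fragment (component) of $x\in E$ if $|z|\wedge|x-z|=0$; $\mathcal{F}_x$ denotes the set of fragments of $x$. An operator $T\colon E\to F$ between vector lattices is orthogonally additive if $T(x+y)=Tx+Ty$ whenever $|x|\wedge|y|=0$; it is order bounded if it maps order bounded sets to order bounded sets. $\mathcal{U}(E,F)$ (abstract Uryson operators) is the set of orthogonally additive order bounded (in general nonlinear) operators $E\to F$, ordered by $S\le T$ iff $Tx-Sx\ge 0$ for all $x\in E$; $\mathcal{U}_+(E,F)$ is its positive cone. When $F$ is Dedekind complete, $\mathcal{U}(E,F)$ is a Dedekind complete vector lattice. $\mathfrak{P}(F)$ denotes the Boolean algebra of band (order) projections of the Dedekind complete vector lattice $F$, with $\rho'\le\rho''$ iff $\rho'\rho''=\rho'$, $\rho'\wedge\rho''=\rho'\rho''$, and $\rho^\perp=I_F-\rho$. A partition of unity in $\mathfrak{P}(F)$ is a family $(\rho_\xi)$ of band projections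 with $\rho_\xi\wedge\rho_\eta=0$ for $\xi\ne\eta$ and $\sup_\xi\rho_\xi=I_F$. An element $u\in F_+$ is a weak order unit if $\{u\}^{\perp\perp}=F$. *)

theory Defs
  imports Main "HOL.Real_Vector_Spaces"
begin

text \<open>Vector lattices are modelled by types of class ordered_real_vector + lattice
  (ordered real vector space whose order is a lattice order).\<close>

definition labs :: "'a::{ordered_real_vector,lattice} \<Rightarrow> 'a" where
  "labs x = sup x (- x)"

definition disj :: "'a::{ordered_real_vector,lattice} \<Rightarrow> 'a \<Rightarrow> bool" where
  "disj x y \<longleftrightarrow> inf (labs x) (labs y) = 0"

definition fragments :: "'a::{ordered_real_vector,lattice} \<Rightarrow> 'a set" where
  "fragments x = {z. disj z (x - z)}"

definition dedekind_complete :: "'b::order itself \<Rightarrow> bool" where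
  "dedekind_complete _ \<longleftrightarrow>
     (\<forall>A::'b set. A \<noteq> {} \<and> bdd_above A \<longrightarrow> (\<exists>s. (\<forall>a\<in>A. a \<le> s) \<and> (\<forall>t. (\<forall>a\<in>A. a \<le> t) \<longrightarrow> s \<le> t)))"

definition orth_additive :: "('a::{ordered_real_vector,lattice} \<Rightarrow> 'b::{ordered_real_vector,lattice}) \<Rightarrow> bool" where
  "orth_additive T \<longleftrightarrow> (\<forall>x y. disj x y \<longrightarrow> T (x + y) = T x + T y)"

text \<open>Order bounded: images of order bounded sets are order bounded
  (equivalently for order intervals, since every order bounded set lies in one).\<close>
definition order_bounded_op :: "('a::{ordered_real_vector,lattice} \<Rightarrow> 'b::{ordered_real_vector,lattice}) \<Rightarrow> bool" where
  "order_bounded_op T \<longleftrightarrow>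
     (\<forall>A::'a set. (\<exists>a b. \<forall>x\<in>A. a \<le> x \<and> x \<le> b) \<longrightarrow> (\<exists>c d. \<forall>x\<in>A. c \<le> T x \<and> T x \<le> d))"

definition uryson :: "('a::{ordered_real_vector,lattice} \<Rightarrow> 'b::{ordered_real_vector,lattice}) set" where
  "uryson = {T. orth_additive T \<and> order_bounded_op T}"

definition uryson_le :: "('a \<Rightarrow> 'b::{ordered_real_vector,lattice}) \<Rightarrow> ('a \<Rightarrow> 'b) \<Rightarrow> bool" where
  "uryson_le S T \<longleftrightarrow> (\<forall>x. 0 \<le> T x - S x)"

definition uryson_pos :: "('a::{ordered_real_vector,lattice} \<Rightarrow> 'b::{ordered_real_vector,lattice}) set" where
  "uryson_pos = {T \<in> uryson. uryson_le (\<lambda>_. 0) T}"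

definition uryson_inf_zero :: "('a::{ordered_real_vector,lattice} \<Rightarrow> 'b::{ordered_real_vector,lattice}) \<Rightarrow> ('a \<Rightarrow> 'b) \<Rightarrow> bool" where
  "uryson_inf_zero S T \<longleftrightarrow>
     uryson_le (\<lambda>_. 0) S \<and> uryson_le (\<lambda>_. 0) T \<and>
     (\<forall>R\<in>uryson. uryson_le R S \<and> uryson_le R T \<longrightarrow> uryson_le R (\<lambda>_. 0))"

definition disj_compl :: "'b::{ordered_real_vector,lattice} set \<Rightarrow> 'b set" where
  "disj_compl A = {y. \<forall>a\<in>A. disj y a}"

definition is_ideal :: "'b::{ordered_real_vector,lattice} set \<Rightarrow> bool" where
  "is_ideal B \<longleftrightarrow> 0 \<in> B \<and> (\<forall>x\<in>B. \<forall>y\<in>B. x + y \<in> B) \<and> (\<forall>c. \<forall>x\<in>B. c *\<^sub>R x \<in> B)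
     \<and> (\<forall>x\<in>B. \<forall>y. labs y \<le> labs x \<longrightarrow> y \<in> B)"

definition is_lub :: "'b::order set \<Rightarrow> 'b \<Rightarrow> bool" where
  "is_lub A s \<longleftrightarrow> (\<forall>a\<in>A. a \<le> s) \<and> (\<forall>t. (\<forall>a\<in>A. a \<le> t) \<longrightarrow> s \<le> t)"

definition is_band :: "'b::{ordered_real_vector,lattice} set \<Rightarrow> bool" where
  "is_band B \<longleftrightarrow> is_ideal B \<and> (\<forall>A s. A \<subseteq> B \<and> is_lub A s \<longrightarrow> s \<in> B)"

definition band_projection :: "('b::{ordered_real_vector,lattice} \<Rightarrow> 'b) \<Rightarrow> bool" where
  "band_projection P \<longleftrightarrow>
     (\<exists>B. is_band B \<and> (\<forall>x. P x \<in> B \<and> x - P x \<in> disj_compl B))"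

text \<open>Order in the Boolean algebra of band projections: \<rho>' \<le> \<rho>'' iff \<rho>'\<rho>'' = \<rho>'; meet is composition.\<close>
definition bp_le :: "('b \<Rightarrow> 'b) \<Rightarrow> ('b \<Rightarrow> 'b) \<Rightarrow> bool" where
  "bp_le P Q \<longleftrightarrow> P \<circ> Q = P"

definition partition_of_unity :: "'i set \<Rightarrow> ('i \<Rightarrow> ('b::{ordered_real_vector,lattice} \<Rightarrow> 'b)) \<Rightarrow> bool" where
  "partition_of_unity D \<pi> \<longleftrightarrow>
     (\<forall>a\<in>D. band_projection (\<pi> a)) \<and>
     (\<forall>a\<in>D. \<forall>b\<in>D. a \<noteq> b \<longrightarrow> \<pi> a \<circ> \<pi> b = (\<lambda>_. 0)) \<and>
     (\<forall>Q. band_projection Q \<and> (\<forall>a\<in>D. bp_le (\<pi> a) Q) \<longrightarrow> Q = id)"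

definition weak_order_unit :: "'b::{ordered_real_vector,lattice} \<Rightarrow> bool" where
  "weak_order_unit u \<longleftrightarrow> 0 \<le> u \<and> disj_compl (disj_compl {u}) = UNIV"

end

theory Submission
  imports Defs "HOL-Library.Lattice_Algebras"
begin


interpretation VL: lattice_ab_group_add_abs labs "(+)" "0::'a::{ordered_real_vector,lattice}" "(-)" uminus "(\<le>)" "(<)" inf sup
  by (unfold_locales; simp add: labs_def)

definition pos :: "'a::{ordered_real_vector,lattice} \<Rightarrow> 'a" where "pos x = sup x 0"
definition neg :: "'a::{ordered_real_vector,lattice} \<Rightarrow> 'a" where "neg x = sup (-x) 0"

lemma labs_ge0[simp]: "0 \<le> labs x" by (rule VL.abs_ge_zero)
lemma labs_minus[simp]: "labs (-x) = labs x" by (rule VL.abs_minus_cancel)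
lemma labs_triangle: "labs (x+y) \<le> labs x + labs y" by (rule VL.abs_triangle_ineq)
lemma le_labs: "x \<le> labs x" by (simp add: labs_def)
lemma minus_le_labs: "-x \<le> labs x" by (simp add: labs_def)
lemma labs_leI: "a \<le> b \<Longrightarrow> -a \<le> b \<Longrightarrow> labs a \<le> b" by (simp add: labs_def)
lemma labs_of_nonneg[simp]: "0 \<le> x \<Longrightarrow> labs x = x" by (rule VL.abs_of_nonneg)
lemma labs_eq_0[simp]: "labs x = 0 \<longleftrightarrow> x = 0" by (rule VL.abs_eq_0)
lemma labs_labs[simp]: "labs (labs x) = labs x" by simp
lemma labs_diff_commute: "labs (x - y) = labs (y - x)"
  by (metis labs_minus minus_diff_eq)

lemma pos_ge0[simp]: "0 \<le> pos x" by (simp add: pos_def)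
lemma neg_ge0[simp]: "0 \<le> neg x" by (simp add: neg_def)
lemma labs_pos_neg: "labs x = pos x + neg x"
proof -
  have "labs x = sup x 0 - inf x 0" using VL.abs_prts[of x]
    by (simp add: lattice_ab_group_add_class.pprt_def lattice_ab_group_add_class.nprt_def
        VL.pprt_def VL.nprt_def)
  moreover have "- inf x 0 = sup (-x) 0" using VL.neg_inf_eq_sup[of x 0] by simp
  ultimately show ?thesis by (simp add: pos_def neg_def diff_conv_add_uminus)
qed
lemma pos_minus_neg: "pos x - neg x = x"
proof -
  have 1: "x = sup x 0 + inf x 0" using VL.add_eq_inf_sup[of x 0] by simp
  have 2: "sup (-x) 0 = - inf x 0" using VL.neg_inf_eq_sup[of x 0] by simp
  show ?thesis unfolding pos_def neg_def 2 using 1 by simp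
qed
lemma pos_le_labs: "pos x \<le> labs x" using labs_pos_neg[of x] neg_ge0[of x] by (metis le_add_same_cancel1)
lemma neg_le_labs: "neg x \<le> labs x" using labs_pos_neg[of x] pos_ge0[of x] by (metis le_add_same_cancel2)
lemma pos_mono: "x \<le> y \<Longrightarrow> pos x \<le> pos y" by (auto simp: pos_def intro: le_supI1)
lemma neg_anti: "x \<le> y \<Longrightarrow> neg y \<le> neg x" by (auto simp: neg_def intro: le_supI1)
lemma le_pos: "x \<le> pos x" by (simp add: pos_def)

lemma inf_add_le:
  fixes a b c :: "'a::{ordered_real_vector,lattice}"
  assumes "0 \<le> a" "0 \<le> b" "0 \<le> c"
  shows "inf (a+b) c \<le> inf a c + inf b c"
proof -
  have "inf a c + inf b c = inf (inf (a+b) (a+c)) (inf (c+b) (c+c))"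
    by (simp add: VL.add_inf_distrib_left VL.add_inf_distrib_right inf_aci)
  moreover have "inf (a+b) c \<le> inf (inf (a+b) (a+c)) (inf (c+b) (c+c))"
    using assms by (auto intro!: le_infI intro: le_infI2 add_increasing add_increasing2)
  ultimately show ?thesis by simp
qed

lemma inf_add_eq:
  fixes a b c :: "'a::{ordered_real_vector,lattice}"
  assumes "0 \<le> a" "0 \<le> b" "0 \<le> c" "inf a b = 0"
  shows "inf (a+b) c = inf a c + inf b c"
proof (rule antisym)
  show "inf (a+b) c \<le> inf a c + inf b c" using inf_add_le assms by blast
  have i0: "inf (inf a c) (inf b c) = 0"
    using assms by (metis inf.absorb1 inf_assoc inf_commute inf_left_commute inf_le1 le_inf_iff)
  have "inf a c + inf b c = sup (inf a c) (inf b c)"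
    using VL.add_eq_inf_sup[of "inf a c" "inf b c"] i0 by simp
  moreover have "sup (inf a c) (inf b c) \<le> inf (a+b) c"
    using assms by (auto intro!: le_infI intro: le_infI1 add_increasing add_increasing2)
  ultimately show "inf a c + inf b c \<le> inf (a+b) c" by simp
qed

lemma inf_pos_neg: "inf (pos x) (neg x) = 0"
proof -
  have "pos x + neg x = sup (pos x) (neg x) + inf (pos x) (neg x)" by (rule VL.add_eq_inf_sup)
  moreover have "sup (pos x) (neg x) = labs x"
    unfolding pos_def neg_def labs_def
    by (metis labs_def labs_ge0 sup.absorb_iff1 sup_assoc sup_commute sup_left_commute)
  ultimately show ?thesis using labs_pos_neg[of x] by simp
qed

lemma disj_sym: "disj x y \<longleftrightarrow> disj y x" by (simp add: disj_def inf_commute)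
lemma disj_symI: "disj x y \<Longrightarrow> disj y x" by (simp add: disj_sym)
lemma disj_mono: "labs p \<le> labs q \<Longrightarrow> disj q z \<Longrightarrow> disj p z"
  unfolding disj_def by (metis antisym inf_mono labs_ge0 le_inf_iff order_refl)
lemma disj_add: "disj x z \<Longrightarrow> disj y z \<Longrightarrow> disj (x+y) z"
proof -
  assume a: "disj x z" "disj y z"
  have "inf (labs (x+y)) (labs z) \<le> inf (labs x + labs y) (labs z)"
    using labs_triangle by (rule inf_mono) simp
  also have "\<dots> \<le> inf (labs x) (labs z) + inf (labs y) (labs z)" by (rule inf_add_le) auto
  also have "\<dots> = 0" using a by (simp add: disj_def)
  finally show ?thesis unfolding disj_def by (simp add: antisym)
qed
lemma disj_minus[simp]: "disj (-x) z \<longleftrightarrow> disj x z" by (simp add: disj_def)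
lemma disj_diff: "disj x z \<Longrightarrow> disj y z \<Longrightarrow> disj (x-y) z"
  using disj_add[of x z "-y"] by simp
lemma disj_zero[simp]: "disj 0 z" by (simp add: disj_def inf_absorb1)
lemma disj_self: "disj x x \<Longrightarrow> x = 0" by (simp add: disj_def)
lemma disj_labs[simp]: "disj (labs x) z \<longleftrightarrow> disj x z" by (simp add: disj_def)
lemma disj_pos_neg: "disj (pos x) (neg x)" by (simp add: disj_def inf_pos_neg)
lemma disj_pos: "disj x z \<Longrightarrow> disj (pos x) z" using disj_mono[of "pos x" x z] pos_le_labs[of x] by simp
lemma disj_neg: "disj x z \<Longrightarrow> disj (neg x) z" using disj_mono[of "neg x" x z] neg_le_labs[of x] by simp

lemma labs_scale_le: "labs (c *\<^sub>R x) \<le> \<bar>c\<bar> *\<^sub>R labs x"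
proof (cases "c \<ge> 0")
  case True
  then show ?thesis
    by (intro labs_leI) (auto intro: scaleR_left_mono le_labs minus_le_labs simp flip: scaleR_minus_right)
next
  case False
  then have "c *\<^sub>R x = \<bar>c\<bar> *\<^sub>R (-x)" by simp
  then show ?thesis
    by (metis abs_ge_zero labs_leI le_labs minus_le_labs scaleR_left_mono scaleR_minus_right labs_minus)
qed

lemma inf_scale_le:
  fixes a b :: "'a::{ordered_real_vector,lattice}"
  assumes "m > 0"
  shows "inf (m *\<^sub>R a) (m *\<^sub>R b) \<le> m *\<^sub>R inf a b"
proof -
  let ?i = "inf (m *\<^sub>R a) (m *\<^sub>R b)"
  have "inverse m *\<^sub>R ?i \<le> inverse m *\<^sub>R (m *\<^sub>R a)" using assms by (intro scaleR_left_mono) auto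
  hence 1: "inverse m *\<^sub>R ?i \<le> a" using assms by simp
  have "inverse m *\<^sub>R ?i \<le> inverse m *\<^sub>R (m *\<^sub>R b)" using assms by (intro scaleR_left_mono) auto
  hence 2: "inverse m *\<^sub>R ?i \<le> b" using assms by simp
  have "m *\<^sub>R (inverse m *\<^sub>R ?i) \<le> m *\<^sub>R inf a b" using 1 2 assms by (intro scaleR_left_mono) auto
  thus ?thesis using assms by simp
qed

lemma disj_scale: "disj x z \<Longrightarrow> disj (c *\<^sub>R x) z"
proof -
  assume a: "disj x z"
  define m where "m = \<bar>c\<bar> + 1"
  have m: "m > 0" "\<bar>c\<bar> \<le> m" "1 \<le> m" by (auto simp: m_def)
  have "inf (labs (c *\<^sub>R x)) (labs z) \<le> inf (m *\<^sub>R labs x) (m *\<^sub>R labs z)"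
  proof (rule inf_mono)
    show "labs (c *\<^sub>R x) \<le> m *\<^sub>R labs x"
      using labs_scale_le[of c x] scaleR_right_mono[OF m(2) labs_ge0[of x]] by simp
    show "labs z \<le> m *\<^sub>R labs z"
      using scaleR_right_mono[OF m(3) labs_ge0[of z]] by simp
  qed
  also have "\<dots> \<le> m *\<^sub>R inf (labs x) (labs z)" by (rule inf_scale_le) (use m in auto)
  also have "\<dots> = 0" using a by (simp add: disj_def)
  finally show ?thesis unfolding disj_def by (simp add: antisym)
qed

lemma labs_diff_disj:
  fixes A C :: "'a::{ordered_real_vector,lattice}"
  assumes "0 \<le> A" "0 \<le> C" "inf A C = 0"
  shows "labs (A - C) = A + C"
proof -
  have d: "disj A C" using assms by (simp add: disj_def)
  have "disj C A" using d disj_symI by blast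
  hence "disj (C+C) A" using disj_add[of C A C] by blast
  hence h: "disj A (C+C)" by (rule disj_symI)
  have "disj (A+A) (C+C)" by (rule disj_add[OF h h])
  hence i: "inf (A+A) (C+C) = 0" using assms by (simp add: disj_def)
  have e1: "A - C + (A + C) = A + A" and e2: "C - A + (A + C) = C + C" by (simp_all add: algebra_simps)
  have "sup (A - C) (C - A) + (A + C) = sup (A+A) (C+C)"
    by (simp only: VL.add_sup_distrib_right e1 e2)
  also have "\<dots> = (A+A) + (C+C)" using VL.add_eq_inf_sup[of "A+A" "C+C"] i by simp
  finally show ?thesis unfolding labs_def by (simp add: algebra_simps)
qed

lemma labs_add_disj:
  assumes "disj p q"
  shows "labs (p + q) = labs p + labs q"
proof -
  let ?A = "pos p + pos q" and ?C = "neg p + neg q"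
  have q: "disj q p" using assms disj_symI by blast
  have pq: "disj (pos p) (neg q)" if "disj p q" for p q
  proof -
    have "disj (pos p) q" using that by (rule disj_pos)
    hence "disj q (pos p)" using disj_symI by blast
    hence "disj (neg q) (pos p)" by (rule disj_neg)
    thus ?thesis using disj_symI by blast
  qed
  have "disj (neg p) (pos p)" using disj_pos_neg disj_symI by blast
  moreover have "disj (neg p) (pos q)" using pq[OF q] disj_symI by blast
  ultimately have a1: "disj (neg p) ?A" using disj_add disj_symI by metis
  have "disj (neg q) (pos q)" using disj_pos_neg disj_symI by blast
  moreover have "disj (neg q) (pos p)" using pq[OF assms] disj_symI by blast
  ultimately have a2: "disj (neg q) ?A" using disj_add disj_symI by metis
  from a1 a2 have "disj ?C ?A" by (rule disj_add)
  hence "disj ?A ?C" using disj_symI by blast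
  hence i: "inf ?A ?C = 0" by (simp add: disj_def add_nonneg_nonneg)
  have "p + q = ?A - ?C" using pos_minus_neg[of p] pos_minus_neg[of q] by (simp add: algebra_simps)
  hence "labs (p+q) = ?A + ?C" using labs_diff_disj[OF _ _ i] by (simp add: add_nonneg_nonneg)
  thus ?thesis by (simp add: labs_pos_neg algebra_simps)
qed


lemma disj_mono2: "labs p \<le> labs x \<Longrightarrow> labs q \<le> labs y \<Longrightarrow> disj x y \<Longrightarrow> disj p q"
  by (meson disj_mono disj_symI)

lemma frag_labs:
  assumes "z \<in> fragments x"
  shows "labs z \<le> labs x" "labs (x - z) \<le> labs x"
proof -
  have d: "disj z (x - z)" using assms by (simp add: fragments_def)
  have "labs x = labs z + labs (x - z)" using labs_add_disj[OF d] by simp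
  thus "labs z \<le> labs x" "labs (x - z) \<le> labs x"
    by (metis le_add_same_cancel1 labs_ge0, metis le_add_same_cancel2 labs_ge0)
qed

lemma frag_0[simp]: "0 \<in> fragments x" by (simp add: fragments_def)
lemma frag_self[simp]: "x \<in> fragments x" by (simp add: fragments_def disj_sym)

lemma frag_add:
  assumes "disj x y" "y1 \<in> fragments x" "y2 \<in> fragments y"
  shows "y1 + y2 \<in> fragments (x + y)" "disj y1 y2" "disj (x - y1) (y - y2)"
proof -
  note l1 = frag_labs[OF assms(2)] and l2 = frag_labs[OF assms(3)]
  have a: "disj y1 y2" "disj y1 (y - y2)" "disj (x - y1) y2" "disj (x - y1) (y - y2)"
    using disj_mono2[OF _ _ assms(1)] l1 l2 by blast+
  have b: "disj y1 (x - y1)" "disj y2 (y - y2)" using assms by (simp_all add: fragments_def)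
  have "disj ((x - y1) + (y - y2)) y1" using disj_add b(1) a(2) disj_symI by blast
  moreover have "disj ((x - y1) + (y - y2)) y2" using disj_add b(2) a(3) disj_symI by blast
  ultimately have "disj (y1 + y2) ((x - y1) + (y - y2))" using disj_add disj_symI by blast
  moreover have eq: "x + y - (y1 + y2) = (x - y1) + (y - y2)" by (simp add: algebra_simps)
  ultimately show "y1 + y2 \<in> fragments (x+y)" by (simp only: fragments_def mem_Collect_eq eq)
  show "disj y1 y2" "disj (x - y1) (y - y2)" using a by auto
qed

definition Xp :: "'a::{ordered_real_vector,lattice} \<Rightarrow> 'a \<Rightarrow> 'a" where
  "Xp x p = inf (pos p) (labs x) - inf (neg p) (labs x)"

lemma Xp_labs: "labs (Xp x p) \<le> inf (labs p) (labs x)"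
proof -
  have n1: "0 \<le> inf (pos p) (labs x)" "0 \<le> inf (neg p) (labs x)" by (simp_all add: le_infI)
  have "labs (Xp x p) \<le> inf (pos p) (labs x) + inf (neg p) (labs x)"
    unfolding Xp_def using labs_triangle[of "inf (pos p) (labs x)" "- inf (neg p) (labs x)"] n1 by simp
  also have "\<dots> = inf (pos p + neg p) (labs x)" by (rule inf_add_eq[symmetric]) (simp_all add: inf_pos_neg)
  also have "\<dots> = inf (labs p) (labs x)" by (simp add: labs_pos_neg)
  finally show ?thesis .
qed

lemma Xp_split:
  assumes "disj x y" "labs p \<le> labs x + labs y"
  shows "p = Xp x p + Xp y p"
proof -
  have i: "inf (labs x) (labs y) = 0" using assms(1) by (simp add: disj_def)
  have "pos p = inf (labs x + labs y) (pos p)" using pos_le_labs[of p] assms(2)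
    by (metis inf.absorb2 order_trans)
  also have "\<dots> = inf (labs x) (pos p) + inf (labs y) (pos p)" by (rule inf_add_eq) (simp_all add: i)
  finally have 1: "pos p = inf (pos p) (labs x) + inf (pos p) (labs y)" by (simp add: inf_commute)
  have "neg p = inf (labs x + labs y) (neg p)" using neg_le_labs[of p] assms(2)
    by (metis inf.absorb2 order_trans)
  also have "\<dots> = inf (labs x) (neg p) + inf (labs y) (neg p)" by (rule inf_add_eq) (simp_all add: i)
  finally have 2: "neg p = inf (neg p) (labs x) + inf (neg p) (labs y)" by (simp add: inf_commute)
  have "p = pos p - neg p" by (simp add: pos_minus_neg)
  also have "\<dots> = (inf (pos p) (labs x) + inf (pos p) (labs y)) - (inf (neg p) (labs x) + inf (neg p) (labs y))"
    by (rule arg_cong2[where f="(-)"], rule 1, rule 2)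
  also have "\<dots> = Xp x p + Xp y p" unfolding Xp_def by (rule add_diff_add)
  finally show ?thesis .
qed

lemma frag_split:
  assumes "disj x y" "z \<in> fragments (x + y)"
  shows "\<exists>z1 \<in> fragments x. \<exists>z2 \<in> fragments y. z = z1 + z2"
proof -
  define v where "v = x + y - z"
  have dzv: "disj z v" using assms(2) by (simp add: fragments_def v_def)
  have lz: "labs z \<le> labs x + labs y" using frag_labs(1)[OF assms(2)] labs_triangle[of x y] by (rule order_trans)
  have lv: "labs v \<le> labs x + labs y" using frag_labs(2)[OF assms(2)] labs_triangle[of x y] unfolding v_def by (rule order_trans)
  have sz: "z = Xp x z + Xp y z" by (rule Xp_split[OF assms(1) lz])
  have sv: "v = Xp x v + Xp y v" by (rule Xp_split[OF assms(1) lv])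
  have e: "z + v = x + y" by (simp add: v_def)
  have e2: "(Xp x z + Xp y z) + (Xp x v + Xp y v) = x + y" using e by (simp only: sz[symmetric] sv[symmetric])
  define L where "L = Xp x z + Xp x v - x"
  have LR: "L = y - Xp y z - Xp y v" using e2 unfolding L_def by (simp add: algebra_simps)
  have lx: "labs (Xp x t) \<le> labs x" for t by (rule order_trans[OF Xp_labs inf_le2])
  have ly: "labs (Xp y t) \<le> labs y" for t by (rule order_trans[OF Xp_labs inf_le2])
  have X: "disj t s" if "labs t \<le> labs x" "labs s \<le> labs y" for t s using disj_mono2 that assms(1) by blast
  have Ls: "disj s L" if "labs s \<le> labs y" for s
  proof -
    have "disj (Xp x z + Xp x v - x) s"
      by (intro disj_diff disj_add X that lx) simp
    thus ?thesis unfolding L_def by (rule disj_symI)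
  qed
  have "disj (y - Xp y z - Xp y v) L" by (intro disj_diff Ls ly) simp
  hence "disj L L" using LR by simp
  hence L0: "L = 0" by (rule disj_self)
  hence ex: "x - Xp x z = Xp x v" unfolding L_def by (simp add: algebra_simps)
  have s1: "Xp x z + Xp x v = x" using ex by (simp add: algebra_simps)
  have s2: "(Xp x z + Xp x v) + (Xp y z + Xp y v) = x + y" using e2 by (simp add: algebra_simps)
  have s3: "Xp y z + Xp y v = y" using s2 unfolding s1 by simp
  have ey: "y - Xp y z = Xp y v" using s3 by (simp add: diff_eq_eq add.commute)
  have lzz: "labs (Xp t z) \<le> labs z" for t by (rule order_trans[OF Xp_labs inf_le1])
  have lvv: "labs (Xp t v) \<le> labs v" for t by (rule order_trans[OF Xp_labs inf_le1])
  have h1: "Xp x z \<in> fragments x" unfolding fragments_def using ex disj_mono2[OF lzz lvv dzv] by simp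
  have h2: "Xp y z \<in> fragments y" unfolding fragments_def using ey disj_mono2[OF lzz lvv dzv] by simp
  show ?thesis
  proof (rule bexI[where x="Xp x z"], rule bexI[where x="Xp y z"])
    show "z = Xp x z + Xp y z" by (rule sz)
  qed (fact h2, fact h1)
qed



lemma dc_lub:
  fixes A :: "'b::order set"
  assumes "dedekind_complete TYPE('b)" "A \<noteq> {}" "\<And>a. a \<in> A \<Longrightarrow> a \<le> M"
  shows "\<exists>s. is_lub A s"
proof -
  have "bdd_above A" using assms(3) by (rule bdd_aboveI)
  thus ?thesis using assms(1,2) unfolding dedekind_complete_def is_lub_def by blast
qed

lemma dc_archimedean:
  fixes v :: "'b::{ordered_real_vector,lattice}"
  assumes dc: "dedekind_complete TYPE('b)" and v: "0 \<le> v" and b: "\<And>n::nat. real n *\<^sub>R v \<le> x"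
  shows "v = 0"
proof -
  let ?A = "range (\<lambda>n::nat. real n *\<^sub>R v)"
  have "\<exists>s. is_lub ?A s" by (rule dc_lub[OF dc, of ?A x]) (auto simp: b)
  then obtain s where s: "is_lub ?A s" by blast
  have "real n *\<^sub>R v \<le> s - v" for n
  proof -
    have "real (Suc n) *\<^sub>R v \<le> s" using s unfolding is_lub_def by blast
    moreover have "real (Suc n) *\<^sub>R v = real n *\<^sub>R v + v" by (simp add: algebra_simps)
    ultimately show ?thesis by (simp add: le_diff_eq)
  qed
  hence "s \<le> s - v" using s unfolding is_lub_def by blast
  hence "v \<le> 0" by simp
  thus ?thesis using v by simp
qed

lemma compl_mem: "x \<in> disj_compl D \<longleftrightarrow> (\<forall>a\<in>D. disj x a)" by (simp add: disj_compl_def)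
lemma compl_0[simp]: "0 \<in> disj_compl D" by (simp add: disj_compl_def)
lemma compl_add: "x \<in> disj_compl D \<Longrightarrow> y \<in> disj_compl D \<Longrightarrow> x + y \<in> disj_compl D"
  by (simp add: disj_compl_def disj_add)
lemma compl_diff: "x \<in> disj_compl D \<Longrightarrow> y \<in> disj_compl D \<Longrightarrow> x - y \<in> disj_compl D"
  by (simp add: disj_compl_def disj_diff)
lemma compl_scale: "x \<in> disj_compl D \<Longrightarrow> c *\<^sub>R x \<in> disj_compl D"
  by (simp add: disj_compl_def disj_scale)
lemma compl_solid: "x \<in> disj_compl D \<Longrightarrow> labs y \<le> labs x \<Longrightarrow> y \<in> disj_compl D"
  by (meson compl_mem disj_mono)

lemma compl_ideal: "is_ideal (disj_compl D)"
  unfolding is_ideal_def using compl_add compl_scale compl_solid by auto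

lemma compl_band:
  fixes D :: "'b::{ordered_real_vector,lattice} set"
  assumes dc: "dedekind_complete TYPE('b)"
  shows "is_band (disj_compl D)"
  unfolding is_band_def
proof (intro conjI allI impI compl_ideal)
  fix A s assume as: "A \<subseteq> disj_compl D \<and> is_lub A s"
  hence AD: "A \<subseteq> disj_compl D" and ub: "\<And>a. a \<in> A \<Longrightarrow> a \<le> s"
    and lub: "\<And>t. (\<forall>a\<in>A. a \<le> t) \<Longrightarrow> s \<le> t" unfolding is_lub_def by auto
  show "s \<in> disj_compl D"
  proof (cases "A = {}")
    case True
    have "s \<le> 0" using lub[of 0] True by auto
    moreover have "s \<le> s + s" using lub[of "s+s"] True by auto
    hence "0 \<le> s" by simp
    ultimately have "s = 0" by (rule antisym)
    thus ?thesis by simp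
  next
    case False
    then obtain a0 where a0: "a0 \<in> A" by blast
    show ?thesis unfolding compl_mem
    proof
      fix d assume d: "d \<in> D"
      have da: "disj a d" if "a \<in> A" for a using AD that d by (auto simp: compl_mem)
      have "neg s \<le> neg a0" using ub[OF a0] by (rule neg_anti)
      hence ns: "disj (neg s) d" using disj_mono[of "neg s" "neg a0" d] disj_neg[OF da[OF a0]] by simp
      define t where "t = inf (pos s) (labs d)"
      have t0: "0 \<le> t" unfolding t_def by (simp add: le_infI)
      have "a \<le> pos s - t" if a: "a \<in> A" for a
      proof -
        have "disj (pos a) d" using da[OF a] by (rule disj_pos)
        hence "disj (pos a) t" using disj_mono[of t d "pos a"] t0 disj_symI
          unfolding t_def by (metis inf_le2 labs_labs labs_of_nonneg)
        hence i: "inf (pos a) t = 0" using t0 by (simp add: disj_def)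
        have "pos a + t = sup (pos a) t" using VL.add_eq_inf_sup[of "pos a" t] i by simp
        also have "\<dots> \<le> pos s" using pos_mono[OF ub[OF a]] unfolding t_def by simp
        finally have pa: "pos a \<le> pos s - t" by (simp add: le_diff_eq)
        show ?thesis by (rule order_trans[OF le_pos pa])
      qed
      hence "s \<le> pos s - t" using lub by blast
      moreover have "0 \<le> pos s - t" using inf_le1[of "pos s" "labs d"] unfolding t_def by (simp only: diff_ge_0_iff_ge)
      ultimately have "pos s \<le> pos s - t" unfolding pos_def by (rule le_supI)
      hence "t \<le> 0" by simp
      hence "t = 0" using t0 by simp
      hence ps: "disj (pos s) d" unfolding t_def disj_def by simp
      have "disj (pos s - neg s) d" using ps ns by (rule disj_diff)
      thus "disj s d" by (simp add: pos_minus_neg)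
    qed
  qed
qed

abbreviation DW :: "'b::{ordered_real_vector,lattice} \<Rightarrow> 'b set" where "DW w \<equiv> disj_compl {w}"
abbreviation DD :: "'b::{ordered_real_vector,lattice} \<Rightarrow> 'b set" where "DD w \<equiv> disj_compl (disj_compl {w})"

lemma DW_mem: "x \<in> DW w \<longleftrightarrow> disj x w" by (simp add: compl_mem)
lemma DD_mem: "x \<in> DD w \<longleftrightarrow> (\<forall>e. disj e w \<longrightarrow> disj x e)" by (auto simp: disj_compl_def)
lemma DD_DW_0: "x \<in> DD w \<Longrightarrow> x \<in> DW w \<Longrightarrow> x = 0"
  by (meson DD_mem DW_mem disj_self)

lemma decomp_pos:
  fixes x w :: "'b::{ordered_real_vector,lattice}"
  assumes dc: "dedekind_complete TYPE('b)" and x: "0 \<le> x"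
  shows "\<exists>b. 0 \<le> b \<and> b \<le> x \<and> b \<in> DD w \<and> x - b \<in> DW w"
proof -
  define W where "W = labs w"
  have W0: "0 \<le> W" by (simp add: W_def)
  let ?A = "range (\<lambda>n::nat. inf x (real n *\<^sub>R W))"
  have "\<exists>s. is_lub ?A s" by (rule dc_lub[OF dc, of ?A x]) auto
  then obtain s where s: "is_lub ?A s" by blast
  have ub: "inf x (real n *\<^sub>R W) \<le> s" for n using s unfolding is_lub_def by blast
  have sx: "s \<le> x" using s unfolding is_lub_def by auto
  have s0: "0 \<le> s" using ub[of 0] x by (simp add: inf_absorb2)
  define v where "v = inf (x - s) W"
  have v0: "0 \<le> v" unfolding v_def using sx W0 by (simp add: le_infI)
  have vW: "v \<le> W" and vxs: "v \<le> x - s" unfolding v_def by simp_all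
  have kv: "real k *\<^sub>R v \<le> s" for k
  proof (induction k)
    case 0 then show ?case using s0 by simp
  next
    case (Suc k)
    have e: "real (Suc k) *\<^sub>R v = real k *\<^sub>R v + v" by (simp add: algebra_simps)
    have "real (Suc k) *\<^sub>R v \<le> x" unfolding e using add_mono[OF Suc vxs] by simp
    moreover have "real (Suc k) *\<^sub>R v \<le> real (Suc k) *\<^sub>R W" using vW by (intro scaleR_left_mono) auto
    ultimately have "real (Suc k) *\<^sub>R v \<le> inf x (real (Suc k) *\<^sub>R W)" by simp
    thus ?case using ub[of "Suc k"] by (rule order_trans)
  qed
  have "v = 0" using dc_archimedean[OF dc v0, of x] kv sx by (meson order_trans)
  hence "x - s \<in> DW w" unfolding DW_mem disj_def using sx v_def W_def by simp
  moreover have "s \<in> DD w"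
  proof -
    have "?A \<subseteq> DD w"
    proof
      fix a assume "a \<in> ?A"
      then obtain n where a: "a = inf x (real n *\<^sub>R W)" by blast
      have nW: "0 \<le> real n *\<^sub>R W" using W0 by (simp add: scaleR_nonneg_nonneg)
      have a0: "0 \<le> a" unfolding a using x nW by (simp add: le_infI)
      show "a \<in> DD w" unfolding DD_mem
      proof (intro allI impI)
        fix e assume "disj e w"
        hence "disj (real n *\<^sub>R W) e" unfolding W_def by (metis disj_labs disj_scale disj_symI)
        moreover have "labs a \<le> labs (real n *\<^sub>R W)" using a0 nW unfolding a by simp
        ultimately show "disj a e" by (rule disj_mono[rotated])
      qed
    qed
    thus ?thesis using compl_band[OF dc] s unfolding is_band_def by blast
  qed
  ultimately show ?thesis using s0 sx by blast
qed

lemma decomp: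
  fixes x w :: "'b::{ordered_real_vector,lattice}"
  assumes dc: "dedekind_complete TYPE('b)"
  shows "\<exists>b. b \<in> DD w \<and> x - b \<in> DW w"
proof -
  obtain b1 where b1: "b1 \<in> DD w" "pos x - b1 \<in> DW w" using decomp_pos[OF dc, of "pos x" w] by auto
  obtain b2 where b2: "b2 \<in> DD w" "neg x - b2 \<in> DW w" using decomp_pos[OF dc, of "neg x" w] by auto
  have "b1 - b2 \<in> DD w" by (rule compl_diff[OF b1(1) b2(1)])
  moreover have eq: "x - (b1 - b2) = (pos x - b1) - (neg x - b2)"
    by (subst (1) pos_minus_neg[of x, symmetric]) (simp add: algebra_simps)
  have "x - (b1 - b2) \<in> DW w" unfolding eq by (rule compl_diff[OF b1(2) b2(2)])
  ultimately show ?thesis by blast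
qed

definition proj :: "'b::{ordered_real_vector,lattice} \<Rightarrow> 'b \<Rightarrow> 'b" where
  "proj w x = (SOME b. b \<in> DD w \<and> x - b \<in> DW w)"

lemma proj_unique:
  assumes "b \<in> DD w" "x - b \<in> DW w" "b' \<in> DD w" "x - b' \<in> DW w"
  shows "b = b'"
proof -
  have "b - b' \<in> DD w" by (rule compl_diff[OF assms(1) assms(3)])
  moreover have "(x - b') - (x - b) \<in> DW w" by (rule compl_diff[OF assms(4) assms(2)])
  hence "b - b' \<in> DW w" by simp
  ultimately show ?thesis using DD_DW_0 by fastforce
qed

context
  fixes dcT :: "'b::{ordered_real_vector,lattice} itself"
  assumes dc: "dedekind_complete TYPE('b)"
begin

lemma proj: "proj w x \<in> DD w \<and> x - proj w x \<in> DW w" for w x :: 'b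
  unfolding proj_def using decomp[OF dc, of w x] by (rule someI_ex)

lemma proj_eq: "b \<in> DD w \<Longrightarrow> x - b \<in> DW w \<Longrightarrow> proj w x = b" for w x b :: 'b
  using proj[of w x] proj_unique by blast

lemma proj_add: "proj w (x + y) = proj w x + proj w y" for w x y :: 'b
proof (rule proj_eq)
  show "proj w x + proj w y \<in> DD w" using proj[of w x] proj[of w y] compl_add by blast
  have "x + y - (proj w x + proj w y) = (x - proj w x) + (y - proj w y)" by simp
  thus "x + y - (proj w x + proj w y) \<in> DW w" using proj[of w x] proj[of w y] compl_add by metis
qed

lemma proj_scale: "proj w (c *\<^sub>R x) = c *\<^sub>R proj w x" for w x :: 'b
proof (rule proj_eq)
  show "c *\<^sub>R proj w x \<in> DD w" using proj[of w x] compl_scale by blast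
  have "c *\<^sub>R x - c *\<^sub>R proj w x = c *\<^sub>R (x - proj w x)" by (simp add: scaleR_diff_right)
  thus "c *\<^sub>R x - c *\<^sub>R proj w x \<in> DW w" using proj[of w x] compl_scale by metis
qed

lemma proj_diff: "proj w (x - y) = proj w x - proj w y" for w x y :: 'b
  using proj_add[of w "x - y" y] by (simp add: algebra_simps)

lemma proj_pos: "0 \<le> x \<Longrightarrow> 0 \<le> proj w x \<and> proj w x \<le> x" for w x :: 'b
  using decomp_pos[OF dc, of x w] proj_eq by metis

lemma proj_DD: "x \<in> DD w \<Longrightarrow> proj w x = x" for w x :: 'b
  by (rule proj_eq) simp_all

lemma proj_DW: "x \<in> DW w \<Longrightarrow> proj w x = 0" for w x :: 'b
  by (rule proj_eq) simp_all

lemma proj_bp: "band_projection (proj w)" for w :: 'b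
  unfolding band_projection_def
proof (intro exI conjI allI)
  show "is_band (DD w)" by (rule compl_band[OF dc])
  fix x
  show "proj w x \<in> DD w" using proj by blast
  show "x - proj w x \<in> disj_compl (DD w)"
    unfolding compl_mem
  proof
    fix e assume e: "e \<in> DD w"
    have h: "x - proj w x \<in> DW w" using proj by blast
    have "disj e (x - proj w x)" using compl_mem[of e "DW w"] e h by blast
    thus "disj (x - proj w x) e" by (rule disj_symI)
  qed
qed

end



lemma partB:
  fixes g :: "'a \<Rightarrow> 'b::{ordered_real_vector,lattice}" and Y :: "'a set"
  assumes dc: "dedekind_complete TYPE('b)" and wu: "weak_order_unit u" and eps: "\<epsilon> > 0"
    and gpos: "\<And>y. y \<in> Y \<Longrightarrow> 0 \<le> g y"
    and inf0: "\<And>c. (\<forall>y\<in>Y. c \<le> g y) \<Longrightarrow> c \<le> 0"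
  shows "\<exists>(D :: ('b \<Rightarrow> 'b) set) (\<pi> :: ('b \<Rightarrow> 'b) \<Rightarrow> ('b \<Rightarrow> 'b)) (xs :: ('b \<Rightarrow> 'b) \<Rightarrow> 'a).
           partition_of_unity D \<pi> \<and> (\<forall>a\<in>D. xs a \<in> Y) \<and> (\<forall>a\<in>D. \<pi> a (g (xs a)) \<le> \<epsilon> *\<^sub>R u)"
proof -
  have u0: "0 \<le> u" using wu by (simp add: weak_order_unit_def)
  have eu0: "0 \<le> \<epsilon> *\<^sub>R u" using u0 eps by (simp add: scaleR_nonneg_nonneg)
  define wy where "wy y = pos (g y - \<epsilon> *\<^sub>R u)" for y
  define Good where "Good = {v. 0 \<le> v \<and> v \<noteq> 0 \<and> (\<exists>y\<in>Y. disj v (wy y))}"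
  define MM where "MM = {M. M \<subseteq> Good \<and> (\<forall>v1\<in>M. \<forall>v2\<in>M. v1 \<noteq> v2 \<longrightarrow> disj v1 v2)}"
  have "\<forall>C\<in>chains MM. \<Union>C \<in> MM"
  proof
    fix C assume C: "C \<in> chains MM"
    hence CM: "C \<subseteq> MM" and ch: "\<And>A B. A \<in> C \<Longrightarrow> B \<in> C \<Longrightarrow> A \<subseteq> B \<or> B \<subseteq> A"
      unfolding chains_def chain_subset_def by auto
    show "\<Union>C \<in> MM" unfolding MM_def
    proof (intro CollectI conjI ballI impI)
      show "\<Union>C \<subseteq> Good" using CM unfolding MM_def by blast
      fix v1 v2 assume v: "v1 \<in> \<Union>C" "v2 \<in> \<Union>C" "v1 \<noteq> v2"
      then obtain A B where AB: "A \<in> C" "B \<in> C" "v1 \<in> A" "v2 \<in> B" by blast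
      from ch[OF AB(1,2)] have "(v1 \<in> A \<and> v2 \<in> A) \<or> (v1 \<in> B \<and> v2 \<in> B)" using AB by blast
      thus "disj v1 v2" using AB(1,2) CM v(3) unfolding MM_def by blast
    qed
  qed
  then obtain M where M: "M \<in> MM" and Mmax: "\<And>X. X \<in> MM \<Longrightarrow> M \<subseteq> X \<Longrightarrow> X = M"
    using Zorn_Lemma[of MM] by blast
  have MG: "M \<subseteq> Good" and Mdisj: "\<And>v1 v2. v1 \<in> M \<Longrightarrow> v2 \<in> M \<Longrightarrow> v1 \<noteq> v2 \<Longrightarrow> disj v1 v2"
    using M unfolding MM_def by auto
  have C1: "\<exists>y\<in>Y. proj v (g y) \<le> \<epsilon> *\<^sub>R u" if v: "v \<in> Good" for v
  proof -
    from v obtain y where y: "y \<in> Y" "disj v (wy y)" unfolding Good_def by blast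
    define d where "d = g y - \<epsilon> *\<^sub>R u"
    have "pos d \<in> DW v" unfolding DW_mem using y(2) unfolding wy_def d_def by (rule disj_symI)
    hence p0: "proj v (pos d) = 0" by (rule proj_DW[OF dc])
    have n0: "0 \<le> proj v (neg d)" using proj_pos[OF dc, of "neg d" v] by simp
    have "proj v d = proj v (pos d) - proj v (neg d)"
      using proj_diff[OF dc, of v "pos d" "neg d"] by (simp add: pos_minus_neg)
    hence pd: "proj v d \<le> 0" using p0 n0 by simp
    have "proj v (g y) = proj v d + proj v (\<epsilon> *\<^sub>R u)"
      using proj_add[OF dc, of v d "\<epsilon> *\<^sub>R u"] unfolding d_def by simp
    also have "\<dots> \<le> proj v (\<epsilon> *\<^sub>R u)" using pd by simp
    also have "\<dots> \<le> \<epsilon> *\<^sub>R u" using proj_pos[OF dc eu0, of v] by simp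
    finally show ?thesis using y(1) by blast
  qed
  define D where "D = proj ` M"
  define xs where "xs p = (SOME y. y \<in> Y \<and> p (g y) \<le> \<epsilon> *\<^sub>R u)" for p :: "'b \<Rightarrow> 'b"
  have xs: "xs a \<in> Y \<and> a (g (xs a)) \<le> \<epsilon> *\<^sub>R u" if "a \<in> D" for a
  proof -
    from that obtain v where v: "v \<in> M" "a = proj v" unfolding D_def by blast
    have "\<exists>y. y \<in> Y \<and> a (g y) \<le> \<epsilon> *\<^sub>R u" using C1[of v] v MG by blast
    thus ?thesis unfolding xs_def by (rule someI_ex)
  qed
  have "partition_of_unity D id"
    unfolding partition_of_unity_def
  proof (intro conjI ballI impI allI)
    fix a assume "a \<in> D"
    thus "band_projection (id a)" unfolding D_def using proj_bp[OF dc] by auto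
  next
    fix a b assume ab: "a \<in> D" "b \<in> D" "a \<noteq> b"
    then obtain v1 v2 where v: "v1 \<in> M" "v2 \<in> M" "a = proj v1" "b = proj v2" unfolding D_def by blast
    hence "v1 \<noteq> v2" using ab by blast
    hence d12: "disj v1 v2" using Mdisj v by blast
    show "id a \<circ> id b = (\<lambda>_. 0)"
    proof
      fix z
      have "proj v2 z \<in> DD v2" using proj[OF dc] by blast
      hence "disj (proj v2 z) v1" using d12 disj_symI unfolding DD_mem by blast
      hence "proj v1 (proj v2 z) = 0" by (intro proj_DW[OF dc]) (simp add: DW_mem)
      thus "(id a \<circ> id b) z = 0" using v by simp
    qed
  next
    fix Q assume Q: "band_projection Q \<and> (\<forall>a\<in>D. bp_le (id a) Q)"
    have QM: "proj v (Q z) = proj v z" if "v \<in> M" for v z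
    proof -
      have "proj v \<circ> Q = proj v" using Q that unfolding D_def bp_le_def by auto
      thus ?thesis by (metis comp_apply)
    qed
    show "Q = id"
    proof
      fix z
      define r where "r = z - Q z"
      define r' where "r' = labs r"
      have r'0: "0 \<le> r'" unfolding r'_def by simp
      have rM: "disj r' v" if "v \<in> M" for v
      proof -
        have "proj v r = 0" unfolding r_def using proj_diff[OF dc, of v z "Q z"] QM[OF that] by simp
        hence "r \<in> DW v" using proj[OF dc, of v r] by simp
        thus ?thesis unfolding r'_def DW_mem by simp
      qed
      have "r' = 0"
      proof (rule ccontr)
        assume r'nz: "r' \<noteq> 0"
        have rdd: "r' \<in> DD (wy y)" if y: "y \<in> Y" for y
        proof -
          define v' where "v' = r' - proj (wy y) r'"
          have pp: "0 \<le> proj (wy y) r' \<and> proj (wy y) r' \<le> r'" using proj_pos[OF dc r'0] by blast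
          have v'0: "0 \<le> v'" using pp unfolding v'_def by simp
          have v'le: "v' \<le> r'" using pp unfolding v'_def by simp
          have v'w: "disj v' (wy y)" using proj[OF dc, of "wy y" r'] unfolding v'_def DW_mem by blast
          have v'M: "disj v' v" if "v \<in> M" for v
            using disj_mono[of v' r' v] rM[OF that] v'0 v'le r'0 by simp
          have "v' = 0"
          proof (rule ccontr)
            assume nz: "v' \<noteq> 0"
            have "v' \<in> Good" unfolding Good_def using v'0 nz v'w y by blast
            have v'M2: "disj v v'" if "v \<in> M" for v using v'M[OF that] by (rule disj_symI)
            have "insert v' M \<in> MM" unfolding MM_def using \<open>v' \<in> Good\<close> MG Mdisj v'M v'M2 by auto
            hence "insert v' M = M" using Mmax by blast
            hence "v' \<in> M" by blast
            hence "disj v' v'" by (rule v'M)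
            thus False using nz disj_self by blast
          qed
          hence "r' = proj (wy y) r'" unfolding v'_def by simp
          thus ?thesis using proj[OF dc, of "wy y" r'] by simp
        qed
        define P where "P = proj r'"
        have lb: "\<epsilon> *\<^sub>R P u \<le> g y" if y: "y \<in> Y" for y
        proof -
          define d where "d = g y - \<epsilon> *\<^sub>R u"
          have "disj (neg d) (wy y)" unfolding wy_def d_def using disj_pos_neg disj_symI by blast
          hence "disj r' (neg d)" using rdd[OF y] unfolding DD_mem by blast
          hence "P (neg d) = 0" unfolding P_def by (intro proj_DW[OF dc]) (simp add: DW_mem disj_sym)
          moreover have "0 \<le> P (pos d)" unfolding P_def using proj_pos[OF dc, of "pos d" r'] by simp
          moreover have "P d = P (pos d) - P (neg d)"
            unfolding P_def using proj_diff[OF dc, of r' "pos d" "neg d"] by (simp add: pos_minus_neg)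
          ultimately have pd: "0 \<le> P d" by simp
          have "\<epsilon> *\<^sub>R P u = P (\<epsilon> *\<^sub>R u)" unfolding P_def by (simp add: proj_scale[OF dc])
          also have "\<dots> \<le> P d + P (\<epsilon> *\<^sub>R u)" using pd by simp
          also have "\<dots> = P (g y)" unfolding P_def d_def using proj_add[OF dc, of r' "g y - \<epsilon> *\<^sub>R u" "\<epsilon> *\<^sub>R u"] by simp
          also have "\<dots> \<le> g y" unfolding P_def using proj_pos[OF dc gpos[OF y], of r'] by simp
          finally show ?thesis .
        qed
        have "\<epsilon> *\<^sub>R P u \<le> 0" using lb inf0 by blast
        hence "inverse \<epsilon> *\<^sub>R (\<epsilon> *\<^sub>R P u) \<le> inverse \<epsilon> *\<^sub>R 0" using eps by (intro scaleR_left_mono) auto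
        hence "P u \<le> 0" using eps by simp
        moreover have "0 \<le> P u" unfolding P_def using proj_pos[OF dc u0, of r'] by simp
        ultimately have "P u = 0" by (rule antisym)
        hence "u \<in> DW r'" using proj[OF dc, of r' u] unfolding P_def by simp
        hence "disj u r'" by (simp add: DW_mem)
        moreover have "r' \<in> DD u" using wu unfolding weak_order_unit_def by simp
        ultimately have "disj r' r'" unfolding DD_mem using disj_symI by blast
        thus False using r'nz disj_self by blast
      qed
      hence "r = 0" unfolding r'_def by simp
      thus "Q z = id z" unfolding r_def by simp
    qed
  qed
  moreover have "\<forall>a\<in>D. xs a \<in> Y" using xs by blast
  moreover have "\<forall>a\<in>D. id a (g (xs a)) \<le> \<epsilon> *\<^sub>R u" using xs by simp
  ultimately show ?thesis by blast
qed



lemma orth_zero: "orth_additive T \<Longrightarrow> T 0 = 0"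
proof -
  assume "orth_additive T"
  hence "T (0 + 0) = T 0 + T 0" unfolding orth_additive_def by (meson disj_zero)
  thus ?thesis by simp
qed

definition is_glb :: "'b::order set \<Rightarrow> 'b \<Rightarrow> bool" where
  "is_glb A g \<longleftrightarrow> (\<forall>a\<in>A. g \<le> a) \<and> (\<forall>t. (\<forall>a\<in>A. t \<le> a) \<longrightarrow> t \<le> g)"

lemma dc_glb:
  fixes A :: "'b::{ordered_real_vector,lattice} set"
  assumes dc: "dedekind_complete TYPE('b)" and ne: "A \<noteq> {}" and lb: "\<And>a. a \<in> A \<Longrightarrow> m \<le> a"
  shows "\<exists>g. is_glb A g"
proof -
  have "\<exists>s. is_lub (uminus ` A) s" by (rule dc_lub[OF dc, of _ "-m"]) (use ne lb in auto)
  then obtain s where s: "is_lub (uminus ` A) s" by blast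
  have "is_glb A (-s)" unfolding is_glb_def
  proof (intro conjI ballI allI impI)
    fix a assume "a \<in> A"
    hence "-a \<le> s" using s unfolding is_lub_def by blast
    thus "-s \<le> a" by (simp add: minus_le_iff)
  next
    fix t assume "\<forall>a\<in>A. t \<le> a"
    hence "\<forall>b\<in>uminus ` A. b \<le> -t" by auto
    hence "s \<le> -t" using s unfolding is_lub_def by blast
    thus "t \<le> -s" by (simp add: le_minus_iff)
  qed
  thus ?thesis by blast
qed

lemma glb_unique: "is_glb A g \<Longrightarrow> is_glb A g' \<Longrightarrow> g = g'"
  unfolding is_glb_def by (meson antisym)

lemma glb_sum:
  fixes A B :: "'b::ordered_ab_group_add set"
  assumes "is_glb A g" "is_glb B h"
  shows "is_glb {a + b | a b. a \<in> A \<and> b \<in> B} (g + h)"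
  unfolding is_glb_def
proof (intro conjI ballI allI impI)
  fix x assume "x \<in> {a + b | a b. a \<in> A \<and> b \<in> B}"
  then obtain a b where "x = a + b" "a \<in> A" "b \<in> B" by blast
  thus "g + h \<le> x" using assms unfolding is_glb_def by (simp add: add_mono)
next
  fix t assume t: "\<forall>x\<in>{a + b | a b. a \<in> A \<and> b \<in> B}. t \<le> x"
  have "t - g \<le> b" if b: "b \<in> B" for b
  proof -
    have "\<forall>a\<in>A. t - b \<le> a" using t b by (force simp: diff_le_eq add.commute)
    hence "t - b \<le> g" using assms(1) unfolding is_glb_def by blast
    thus ?thesis by (simp add: diff_le_eq add.commute)
  qed
  hence "t - g \<le> h" using assms(2) unfolding is_glb_def by blast
  thus "t \<le> g + h" by (simp add: diff_le_eq add.commute)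
qed

lemma partA:
  fixes S T :: "'a::{ordered_real_vector,lattice} \<Rightarrow> 'b::{ordered_real_vector,lattice}"
  assumes dc: "dedekind_complete TYPE('b)"
    and Sp: "S \<in> uryson_pos" and Tp: "T \<in> uryson_pos"
    and ST: "uryson_inf_zero S T"
    and c: "\<forall>y\<in>fragments x. c \<le> T y + S (x - y)"
  shows "c \<le> 0"
proof -
  have oaS: "orth_additive S" and obS: "order_bounded_op S" and S0: "\<And>z. 0 \<le> S z"
    using Sp unfolding uryson_pos_def uryson_def uryson_le_def by auto
  have oaT: "orth_additive T" and T0: "\<And>z. 0 \<le> T z"
    using Tp unfolding uryson_pos_def uryson_def uryson_le_def by auto
  define AA where "AA z = {T y + S (z - y) | y. y \<in> fragments z}" for z
  have ne: "AA z \<noteq> {}" for z unfolding AA_def using frag_0 by blast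
  have lb0: "0 \<le> a" if "a \<in> AA z" for a z using that S0 T0 unfolding AA_def
    by (auto intro: add_nonneg_nonneg)
  define R where "R z = (SOME g. is_glb (AA z) g)" for z
  have R: "is_glb (AA z) (R z)" for z
    unfolding R_def using dc_glb[OF dc ne lb0] by (rule someI_ex)
  have RS: "R z \<le> S z" for z
  proof -
    have "T 0 + S (z - 0) \<in> AA z" unfolding AA_def using frag_0 by blast
    thus ?thesis using R[of z] orth_zero[OF oaT] unfolding is_glb_def by auto
  qed
  have RT: "R z \<le> T z" for z
  proof -
    have "T z + S (z - z) \<in> AA z" unfolding AA_def using frag_self by blast
    thus ?thesis using R[of z] orth_zero[OF oaS] unfolding is_glb_def by auto
  qed
  have R0: "0 \<le> R z" for z using R[of z] lb0 unfolding is_glb_def by blast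
  have oaR: "orth_additive R" unfolding orth_additive_def
  proof (intro allI impI)
    fix x y :: 'a assume dxy: "disj x y"
    have eq: "AA (x + y) = {a + b | a b. a \<in> AA x \<and> b \<in> AA y}"
    proof (intro equalityI subsetI)
      fix w assume "w \<in> AA (x + y)"
      then obtain z where z: "z \<in> fragments (x + y)" "w = T z + S (x + y - z)" unfolding AA_def by blast
      obtain z1 z2 where zz: "z1 \<in> fragments x" "z2 \<in> fragments y" "z = z1 + z2"
        using frag_split[OF dxy z(1)] by blast
      have "T z = T z1 + T z2" using oaT frag_add(2)[OF dxy zz(1,2)] unfolding orth_additive_def zz(3) by blast
      moreover have "S (x + y - z) = S (x - z1) + S (y - z2)"
      proof -
        have "x + y - z = (x - z1) + (y - z2)" unfolding zz(3) by (simp add: algebra_simps)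
        thus ?thesis using oaS frag_add(3)[OF dxy zz(1,2)] unfolding orth_additive_def by metis
      qed
      ultimately have "w = (T z1 + S (x - z1)) + (T z2 + S (y - z2))" using z(2) by (simp add: algebra_simps)
      moreover have "T z1 + S (x - z1) \<in> AA x" "T z2 + S (y - z2) \<in> AA y" unfolding AA_def using zz by blast+
      ultimately show "w \<in> {a + b | a b. a \<in> AA x \<and> b \<in> AA y}" by blast
    next
      fix w assume "w \<in> {a + b | a b. a \<in> AA x \<and> b \<in> AA y}"
      then obtain z1 z2 where zz: "z1 \<in> fragments x" "z2 \<in> fragments y"
        and w: "w = (T z1 + S (x - z1)) + (T z2 + S (y - z2))" unfolding AA_def by blast
      have "T (z1 + z2) = T z1 + T z2" using oaT frag_add(2)[OF dxy zz(1,2)] unfolding orth_additive_def by blast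
      moreover have "S (x + y - (z1 + z2)) = S (x - z1) + S (y - z2)"
      proof -
        have "x + y - (z1 + z2) = (x - z1) + (y - z2)" by (simp add: algebra_simps)
        thus ?thesis using oaS frag_add(3)[OF dxy zz(1,2)] unfolding orth_additive_def by metis
      qed
      ultimately have "w = T (z1 + z2) + S (x + y - (z1 + z2))" using w by (simp add: algebra_simps)
      moreover have "z1 + z2 \<in> fragments (x + y)" by (rule frag_add(1)[OF dxy zz(1,2)])
      ultimately show "w \<in> AA (x + y)" unfolding AA_def by blast
    qed
    have "is_glb (AA (x + y)) (R x + R y)" unfolding eq by (rule glb_sum[OF R R])
    thus "R (x + y) = R x + R y" using R[of "x + y"] glb_unique by blast
  qed
  have obR: "order_bounded_op R" unfolding order_bounded_op_def
  proof (intro allI impI)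
    fix A :: "'a set" assume "\<exists>a b. \<forall>x\<in>A. a \<le> x \<and> x \<le> b"
    then obtain c d where cd: "\<forall>x\<in>A. c \<le> S x \<and> S x \<le> d" using obS unfolding order_bounded_op_def by blast
    have "\<forall>x\<in>A. 0 \<le> R x \<and> R x \<le> d" using cd R0 RS order_trans by blast
    thus "\<exists>c d. \<forall>x\<in>A. c \<le> R x \<and> R x \<le> d" by blast
  qed
  have "R \<in> uryson" unfolding uryson_def using oaR obR by blast
  moreover have "uryson_le R S" "uryson_le R T" unfolding uryson_le_def using RS RT by auto
  ultimately have "uryson_le R (\<lambda>_. 0)" using ST unfolding uryson_inf_zero_def by blast
  hence "R x \<le> 0" unfolding uryson_le_def by simp
  moreover have "c \<le> R x" using R[of x] c unfolding is_glb_def AA_def by blast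
  ultimately show ?thesis by (rule order_trans[rotated])
qed

theorem theorem3p2:
  fixes S T :: "'a::{ordered_real_vector,lattice} \<Rightarrow> 'b::{ordered_real_vector,lattice}"
  assumes "dedekind_complete TYPE('b)"
    and "S \<in> uryson_pos" and "T \<in> uryson_pos"
    and "uryson_inf_zero S T"
    and "weak_order_unit u"
    and "(\<epsilon>::real) > 0"
  shows "\<exists>(D :: ('b \<Rightarrow> 'b) set) (\<pi> :: ('b \<Rightarrow> 'b) \<Rightarrow> ('b \<Rightarrow> 'b)) (xs :: ('b \<Rightarrow> 'b) \<Rightarrow> 'a).
           partition_of_unity D \<pi> \<and> (\<forall>a\<in>D. xs a \<in> fragments x) \<and>
           (\<forall>a\<in>D. \<pi> a (T (xs a) + S (x - xs a)) \<le> \<epsilon> *\<^sub>R u)"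
proof -
  have S0: "\<And>z. 0 \<le> S z" and T0: "\<And>z. 0 \<le> T z"
    using assms(2,3) unfolding uryson_pos_def uryson_le_def by auto
  have gpos: "0 \<le> T y + S (x - y)" for y using S0 T0 by (simp add: add_nonneg_nonneg)
  have inf0: "c \<le> 0" if "\<forall>y\<in>fragments x. c \<le> T y + S (x - y)" for c
    using partA[OF assms(1-4) that] .
  show ?thesis
    using partB[OF assms(1) assms(5) assms(6), of "fragments x" "\<lambda>y. T y + S (x - y)"] gpos inf0
    by blast
qed


end
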